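(* Let $H$ be a graph and let $G$ be the graph obtained from $H$ by subdividing every edge of $H$ exactly twice (i.e., replacing each edge $xy$ of $H$ by a path $x\,a\,b\,y$ with two new internal vertices $a,b$). Let $m=|E(G)|$. Then ${\rm I}_e(G) \geq \frac{1}{3}m$.
   Context: All graphs are finite and simple. A graph is locally irregular if no two adjacent vertices have the same degree. For a graph $G$, an edge-irregulator of $G$ is a set $S\subseteq E(G)$ such that $G-S$ (the graph obtained by deleting the edges of $S$, keeping all vertices) is locally irregular. ${\rm I}_e(G)$ denotes the minimum cardinality of an edge-irregulator of $G$. *)

theory Defs
  imports Complex_Main
begin

definition simple_graph :: "'a set \<Rightarrow> 'a set set \<Rightarrow> bool" where
  "simple_graph V E \<longleftrightarrow> finite V \<and>
     (\<forall>e\<in>E. \<exists>x y. x \<noteq> y \<and> x \<in> V \<and> y \<in> V \<and> e = {x, y})"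

definition degree :: "'a set set \<Rightarrow> 'a \<Rightarrow> nat" where
  "degree E v = card {e \<in> E. v \<in> e}"

definition locally_irregular :: "'a set \<Rightarrow> 'a set set \<Rightarrow> bool" where
  "locally_irregular V E \<longleftrightarrow>
     (\<forall>u\<in>V. \<forall>v\<in>V. {u, v} \<in> E \<longrightarrow> u \<noteq> v \<longrightarrow> degree E u \<noteq> degree E v)"

definition edge_irregulator :: "'a set \<Rightarrow> 'a set set \<Rightarrow> 'a set set \<Rightarrow> bool" where
  "edge_irregulator V E S \<longleftrightarrow> S \<subseteq> E \<and> locally_irregular V (E - S)"

definition Ie :: "'a set \<Rightarrow> 'a set set \<Rightarrow> nat" where
  "Ie V E = (LEAST k. \<exists>S. edge_irregulator V E S \<and> card S = k)"

text \<open>Subdividing every edge twice: edge {x,y} becomes the path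
  Inl x -- Inr (x,y) -- Inr (y,x) -- Inl y.\<close>
definition sub2_V :: "'a set \<Rightarrow> 'a set set \<Rightarrow> ('a + 'a \<times> 'a) set" where
  "sub2_V V E = Inl ` V \<union> {Inr (x, y) | x y. x \<noteq> y \<and> {x, y} \<in> E}"

definition sub2_E :: "'a set set \<Rightarrow> ('a + 'a \<times> 'a) set set" where
  "sub2_E E = (\<Union>(x, y) \<in> {(x, y). x \<noteq> y \<and> {x, y} \<in> E}.
                 {{Inl x, Inr (x, y)}, {Inr (x, y), Inr (y, x)}})"

end

theory Submission
  imports Defs
begin

definition hh :: "('a + 'a \<times> 'a) set \<Rightarrow> 'a set" where
  "hh t = {z. \<exists>w. Inr (z, w) \<in> t \<or> Inr (w, z) \<in> t}"

lemma hh1: "hh {Inl x, Inr (x, y)} = {x, y}"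
  unfolding hh_def by auto

lemma hh2: "hh {Inr (x, y), Inr (y, x)} = {x, y}"
  unfolding hh_def by auto

lemma sub2_E_cases:
  assumes "t \<in> sub2_E E"
  obtains x y where "x \<noteq> y" "{x, y} \<in> E" "t = {Inl x, Inr (x, y)} \<or> t = {Inr (x, y), Inr (y, x)}"
  using assms unfolding sub2_E_def by auto

lemma sub2_E_I1: "x \<noteq> y \<Longrightarrow> {x, y} \<in> E \<Longrightarrow> {Inl x, Inr (x, y)} \<in> sub2_E E"
  unfolding sub2_E_def by blast

lemma sub2_E_I2: "x \<noteq> y \<Longrightarrow> {x, y} \<in> E \<Longrightarrow> {Inr (x, y), Inr (y, x)} \<in> sub2_E E"
  unfolding sub2_E_def by blast

lemma inc_set:
  assumes "x \<noteq> y" "{x, y} \<in> E"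
  shows "{t \<in> sub2_E E. Inr (x, y) \<in> t} = {{Inl x, Inr (x, y)}, {Inr (x, y), Inr (y, x)}}"
proof
  show "{t \<in> sub2_E E. Inr (x, y) \<in> t} \<subseteq> {{Inl x, Inr (x, y)}, {Inr (x, y), Inr (y, x)}}"
  proof
    fix t assume "t \<in> {t \<in> sub2_E E. Inr (x, y) \<in> t}"
    then have t: "t \<in> sub2_E E" "Inr (x, y) \<in> t" by auto
    from t(1) obtain u v where "u \<noteq> v" "{u, v} \<in> E"
      "t = {Inl u, Inr (u, v)} \<or> t = {Inr (u, v), Inr (v, u)}" by (rule sub2_E_cases)
    then show "t \<in> {{Inl x, Inr (x, y)}, {Inr (x, y), Inr (y, x)}}"
      using t(2) by auto
  qed
  show "{{Inl x, Inr (x, y)}, {Inr (x, y), Inr (y, x)}} \<subseteq> {t \<in> sub2_E E. Inr (x, y) \<in> t}"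
    using sub2_E_I1[OF assms] sub2_E_I2[OF assms] by auto
qed

lemma key:
  assumes irr: "edge_irregulator (sub2_V V E) (sub2_E E) S"
    and xy: "x \<noteq> y" "{x, y} \<in> E"
  shows "\<exists>s\<in>S. hh s = {x, y}"
proof (rule ccontr)
  assume na: "\<not> (\<exists>s\<in>S. hh s = {x, y})"
  have yx: "y \<noteq> x" "{y, x} \<in> E" using xy by (auto simp: insert_commute)
  have n1: "{Inl x, Inr (x, y)} \<notin> S" using na hh1[of x y] by auto
  have n2: "{Inl y, Inr (y, x)} \<notin> S" using na hh1[of y x] by (auto simp: insert_commute)
  have n3: "{Inr (x, y), Inr (y, x)} \<notin> S" using na hh2[of x y] by auto
  have n3': "{Inr (y, x), Inr (x, y)} \<notin> S" using n3 by (simp add: insert_commute)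
  let ?E' = "sub2_E E - S"
  have d1: "{t \<in> ?E'. Inr (x, y) \<in> t} = {{Inl x, Inr (x, y)}, {Inr (x, y), Inr (y, x)}}"
    using inc_set[OF xy] n1 n3 by blast
  have d2: "{t \<in> ?E'. Inr (y, x) \<in> t} = {{Inl y, Inr (y, x)}, {Inr (y, x), Inr (x, y)}}"
    using inc_set[OF yx] n2 n3' by blast
  have deg1: "degree ?E' (Inr (x, y)) = 2"
    unfolding degree_def d1 by (simp add: doubleton_eq_iff)
  have deg2: "degree ?E' (Inr (y, x)) = 2"
    unfolding degree_def d2 by (simp add: doubleton_eq_iff)
  have inV: "Inr (x, y) \<in> sub2_V V E" "Inr (y, x) \<in> sub2_V V E"
    unfolding sub2_V_def using xy yx by auto
  have inE: "{Inr (x, y), Inr (y, x)} \<in> ?E'" using sub2_E_I2[OF xy] n3 by auto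
  have "locally_irregular (sub2_V V E) ?E'" using irr unfolding edge_irregulator_def by auto
  then show False using inV inE deg1 deg2 xy(1) unfolding locally_irregular_def by auto
qed

lemma fin_sub2:
  assumes "simple_graph V E"
  shows "finite (sub2_E E)"
proof -
  have D: "{(x, y). x \<noteq> y \<and> {x, y} \<in> E} \<subseteq> V \<times> V"
  proof
    fix p assume "p \<in> {(x, y). x \<noteq> y \<and> {x, y} \<in> E}"
    then obtain x y where p: "p = (x, y)" "{x, y} \<in> E" by auto
    then obtain a b where "a \<in> V" "b \<in> V" "{x, y} = {a, b}"
      using assms unfolding simple_graph_def by blast
    then show "p \<in> V \<times> V" using p by (auto simp: doubleton_eq_iff)
  qed
  have "finite V" using assms unfolding simple_graph_def by auto
  then have "finite {(x, y). x \<noteq> y \<and> {x, y} \<in> E}" using D finite_subset by blast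
  then show ?thesis unfolding sub2_E_def by auto
qed

lemma fiber3:
  "card {t \<in> sub2_E E. hh t = {a, b}} \<le> 3"
proof -
  have "{t \<in> sub2_E E. hh t = {a, b}} \<subseteq> {{Inl a, Inr (a, b)}, {Inl b, Inr (b, a)}, {Inr (a, b), Inr (b, a)}}"
  proof
    fix t assume "t \<in> {t \<in> sub2_E E. hh t = {a, b}}"
    then have t: "t \<in> sub2_E E" "hh t = {a, b}" by auto
    from t(1) obtain u v where "u \<noteq> v" "{u, v} \<in> E"
      and tc: "t = {Inl u, Inr (u, v)} \<or> t = {Inr (u, v), Inr (v, u)}" by (rule sub2_E_cases)
    have "hh t = {u, v}" using tc hh1 hh2 by metis
    then have "(u = a \<and> v = b) \<or> (u = b \<and> v = a)" using t(2) by (auto simp: doubleton_eq_iff)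
    then show "t \<in> {{Inl a, Inr (a, b)}, {Inl b, Inr (b, a)}, {Inr (a, b), Inr (b, a)}}"
      using tc by (auto simp: insert_commute)
  qed
  then have "card {t \<in> sub2_E E. hh t = {a, b}} \<le> card {{Inl a, Inr (a, b)}, {Inl b, Inr (b, a)}, {Inr (a, b), Inr (b, a)}}"
    by (intro card_mono) auto
  also have "\<dots> \<le> 3" by (simp add: card_insert_le_m1)
  finally show ?thesis .
qed

lemma bound:
  assumes irr: "edge_irregulator (sub2_V V E) (sub2_E E) S" and fin: "finite (sub2_E E)"
  shows "card (sub2_E E) \<le> 3 * card S"
proof -
  have SE: "S \<subseteq> sub2_E E" using irr unfolding edge_irregulator_def by auto
  have finS: "finite S" using SE fin finite_subset by blast
  have "sub2_E E \<subseteq> (\<Union>s\<in>S. {t \<in> sub2_E E. hh t = hh s})"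
  proof
    fix t assume t: "t \<in> sub2_E E"
    then obtain u v where uv: "u \<noteq> v" "{u, v} \<in> E"
      and tc: "t = {Inl u, Inr (u, v)} \<or> t = {Inr (u, v), Inr (v, u)}" by (rule sub2_E_cases)
    have "hh t = {u, v}" using tc hh1 hh2 by metis
    moreover obtain s where "s \<in> S" "hh s = {u, v}" using key[OF irr uv] by blast
    ultimately show "t \<in> (\<Union>s\<in>S. {t \<in> sub2_E E. hh t = hh s})" using t by auto
  qed
  then have "card (sub2_E E) \<le> card (\<Union>s\<in>S. {t \<in> sub2_E E. hh t = hh s})"
    by (intro card_mono) (use finS fin in auto)
  also have "\<dots> \<le> (\<Sum>s\<in>S. card {t \<in> sub2_E E. hh t = hh s})"
    by (rule card_UN_le[OF finS])
  also have "\<dots> \<le> (\<Sum>s\<in>S. 3)"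
  proof (rule sum_mono)
    fix s assume "s \<in> S"
    then have "s \<in> sub2_E E" using SE by auto
    then obtain u v where "u \<noteq> v" "{u, v} \<in> E"
      and sc: "s = {Inl u, Inr (u, v)} \<or> s = {Inr (u, v), Inr (v, u)}" by (rule sub2_E_cases)
    have "hh s = {u, v}" using sc hh1 hh2 by metis
    then show "card {t \<in> sub2_E E. hh t = hh s} \<le> 3" using fiber3 by simp
  qed
  finally show ?thesis by simp
qed

theorem theorem1:
  fixes V :: "'a set" and E :: "'a set set"
  assumes "simple_graph V E"
  shows "real (Ie (sub2_V V E) (sub2_E E)) \<ge> real (card (sub2_E E)) / 3"
proof -
  have ex: "\<exists>S. edge_irregulator (sub2_V V E) (sub2_E E) S \<and> card S = card (sub2_E E)"
    unfolding edge_irregulator_def locally_irregular_def by auto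
  have "\<exists>S. edge_irregulator (sub2_V V E) (sub2_E E) S \<and> card S = Ie (sub2_V V E) (sub2_E E)"
    unfolding Ie_def by (rule LeastI_ex) (use ex in blast)
  then obtain S where S: "edge_irregulator (sub2_V V E) (sub2_E E) S"
    "card S = Ie (sub2_V V E) (sub2_E E)" by blast
  have "card (sub2_E E) \<le> 3 * card S" using bound[OF S(1) fin_sub2[OF assms]] .
  then show ?thesis using S(2) by linarith
qed

end
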